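(* Assume $\mu p<1$ and consider the model on the infinite Galton–Watson tree $\mathbb{T}$ with the information starting at the vertex $x$ at distance $r\ge 0$ from the root. Then $$ E_r (S) = \frac{1}{1 - \mu p} \bigg(1 + q \,\frac{1 - q^r}{1 - q} \,(1 - p) \bigg). $$ If instead $\mu p>1$, then $E_r(S)=\infty$ on the infinite tree.
   Context: Let $(p_k)_{k\ge 0}$ be an offspring distribution with $p_0=0$ and finite mean $\mu=\sum_k kp_k$. Let $\mathbb{T}$ be a Galton–Watson tree with root $0$ and offspring distribution $(p_k)$. Fix $p,q\in(0,1)$. Each edge of the tree is replaced by two arrows: the arrow parent $\to$ offspring is open with probability $p$ and the arrow offspring $\to$ parent is open with probability $q$, all arrows independently of each other and of the tree. The source of the information is a vertex $x$ at distance $r$ from the root chosen independently of the offspring numbers of its ancestors and of the percolation (e.g. the vertex obtained from the root by always moving to the first offspring). The cluster is $\mathscr{C}=\{y: \text{there is a directed open path from } x \text{ to } y\}$ (including $x$) and $S=\operatorname{card}(\mathscr{C})$. $E_r$ denotes expectation over both the tree and the percolation when the source is at distance $r$ from the root. *)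

theory Defs
  imports "HOL-Probability.Probability"
begin

text \<open>Vertices of the Ulam-Harris tree are lists of child indices, stored in reversed
order: the i-th child (i = 0,1,...) of vertex v is i # v; the root is [].
A sample point \<omega> assigns to each vertex v a triple (N v, D v, U v):
N v is the number of offspring of v, D v says whether the arrow parent(v) -> v is open,
U v says whether the arrow v -> parent(v) is open (the marks of the root are unused).\<close>

type_synonym sample = "nat list \<Rightarrow> nat \<times> bool \<times> bool"

definition offs :: "sample \<Rightarrow> nat list \<Rightarrow> nat" where
  "offs \<omega> v = fst (\<omega> v)"

definition down_open :: "sample \<Rightarrow> nat list \<Rightarrow> bool" where
  "down_open \<omega> v = fst (snd (\<omega> v))"

definition up_open :: "sample \<Rightarrow> nat list \<Rightarrow> bool" where
  "up_open \<omega> v = snd (snd (\<omega> v))"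

inductive_set gw_tree :: "sample \<Rightarrow> nat list set" for \<omega> where
  root: "[] \<in> gw_tree \<omega>"
| child: "v \<in> gw_tree \<omega> \<Longrightarrow> i < offs \<omega> v \<Longrightarrow> i # v \<in> gw_tree \<omega>"

definition open_arrow :: "sample \<Rightarrow> nat list \<Rightarrow> nat list \<Rightarrow> bool" where
  "open_arrow \<omega> a b \<longleftrightarrow>
     (\<exists>i. b = i # a \<and> b \<in> gw_tree \<omega> \<and> down_open \<omega> b) \<or>
     (\<exists>i. a = i # b \<and> a \<in> gw_tree \<omega> \<and> up_open \<omega> a)"

definition cluster :: "sample \<Rightarrow> nat list \<Rightarrow> nat list set" where
  "cluster \<omega> x = {y. (open_arrow \<omega>)\<^sup>*\<^sup>* x y}"

definition cluster_size :: "sample \<Rightarrow> nat list \<Rightarrow> ennreal" where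
  "cluster_size \<omega> x = emeasure (count_space UNIV) (cluster \<omega> x)"

definition gw_perc :: "nat pmf \<Rightarrow> real \<Rightarrow> real \<Rightarrow> sample measure" where
  "gw_perc P p q = PiM UNIV (\<lambda>v. measure_pmf (pair_pmf P (pair_pmf (bernoulli_pmf p) (bernoulli_pmf q))))"

text \<open>Source at distance r: obtained from the root by always moving to the first offspring.\<close>
definition source :: "nat \<Rightarrow> nat list" where
  "source r = replicate r 0"

definition expected_cluster_size :: "nat pmf \<Rightarrow> real \<Rightarrow> real \<Rightarrow> nat \<Rightarrow> ennreal" where
  "expected_cluster_size P p q r = (\<integral>\<^sup>+ \<omega>. cluster_size \<omega> (source r) \<partial>gw_perc P p q)"

end

theory Submission
  imports Defs
begin

abbreviation Z :: "nat \<Rightarrow> nat list" where "Z k \<equiv> replicate k 0"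

definition Param :: "nat \<Rightarrow> (nat \<times> nat list) set" where
  "Param r = {(k,w). k \<le> r \<and> (k = r \<or> w = [] \<or> last w \<noteq> 0)}"

fun dpath :: "sample \<Rightarrow> nat list \<Rightarrow> nat list \<Rightarrow> bool" where
  "dpath \<omega> [] z = True"
| "dpath \<omega> (i#w) z = (dpath \<omega> w z \<and> i < offs \<omega> (w@z) \<and> down_open \<omega> (i#w@z))"

definition cond :: "nat \<Rightarrow> nat \<Rightarrow> nat list \<Rightarrow> sample \<Rightarrow> bool" where
  "cond r k w \<omega> = ((\<forall>j\<in>{k<..r}. up_open \<omega> (Z j)) \<and> dpath \<omega> w (Z k))"

lemma tree_parent: "i # v \<in> gw_tree \<omega> \<Longrightarrow> v \<in> gw_tree \<omega> \<and> i < offs \<omega> v"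
  by (erule gw_tree.cases) auto

lemma tree_drop: "v \<in> gw_tree \<omega> \<Longrightarrow> drop n v \<in> gw_tree \<omega>"
proof (induction n arbitrary: v)
  case 0 then show ?case by simp
next
  case (Suc n)
  show ?case
  proof (cases v)
    case Nil then show ?thesis using Suc by simp
  next
    case (Cons a u) then show ?thesis using Suc tree_parent by auto
  qed
qed

lemma tree_Z: "Z r \<in> gw_tree \<omega> \<Longrightarrow> k \<le> r \<Longrightarrow> Z k \<in> gw_tree \<omega>"
  using tree_drop[of "Z r" \<omega> "r - k"] by simp

lemma dpath_tree: "z \<in> gw_tree \<omega> \<Longrightarrow> dpath \<omega> w z \<Longrightarrow> w @ z \<in> gw_tree \<omega>"
  by (induction w) (auto intro: gw_tree.child)

lemma dpath_reach: "z \<in> gw_tree \<omega> \<Longrightarrow> dpath \<omega> w z \<Longrightarrow> (open_arrow \<omega>)\<^sup>*\<^sup>* z (w @ z)"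
proof (induction w)
  case Nil then show ?case by simp
next
  case (Cons i w)
  have t: "i # w @ z \<in> gw_tree \<omega>" using Cons dpath_tree[of z \<omega> "i#w"] by simp
  have "open_arrow \<omega> (w @ z) (i # w @ z)"
    using Cons t unfolding open_arrow_def by auto
  then show ?case using Cons by (auto intro: rtranclp.rtrancl_into_rtrancl)
qed

lemma up_reach:
  assumes "Z r \<in> gw_tree \<omega>"
  shows "k \<le> r \<Longrightarrow> (\<forall>j\<in>{k<..r}. up_open \<omega> (Z j)) \<Longrightarrow> (open_arrow \<omega>)\<^sup>*\<^sup>* (Z r) (Z k)"
proof (induction "r - k" arbitrary: k)
  case 0 then show ?case by simp
next
  case (Suc d)
  have IH: "(open_arrow \<omega>)\<^sup>*\<^sup>* (Z r) (Z (Suc k))"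
    using Suc.hyps(1)[of "Suc k"] Suc.hyps(2) Suc.prems by auto
  have t: "0 # Z k \<in> gw_tree \<omega>" using tree_Z[OF assms, of "Suc k"] Suc by simp
  have "Suc k \<in> {k<..r}" using Suc.hyps(2) by auto
  then have "up_open \<omega> (Z (Suc k))" using Suc.prems(2) by blast
  then have "open_arrow \<omega> (Z (Suc k)) (Z k)"
    using t unfolding open_arrow_def by auto
  then show ?case using IH by (auto intro: rtranclp.rtrancl_into_rtrancl)
qed

lemma cond_reach:
  assumes "Z r \<in> gw_tree \<omega>" "k \<le> r" "cond r k w \<omega>"
  shows "(open_arrow \<omega>)\<^sup>*\<^sup>* (Z r) (w @ Z k)"
proof -
  have a: "(open_arrow \<omega>)\<^sup>*\<^sup>* (Z r) (Z k)" using up_reach assms unfolding cond_def by blast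
  have "(open_arrow \<omega>)\<^sup>*\<^sup>* (Z k) (w @ Z k)"
    using dpath_reach[OF tree_Z[OF assms(1,2)]] assms(3) unfolding cond_def by blast
  with a show ?thesis by (rule rtranclp_trans)
qed

definition Inv :: "nat \<Rightarrow> sample \<Rightarrow> nat list \<Rightarrow> bool" where
  "Inv r \<omega> y = (\<exists>k w. (k,w) \<in> Param r \<and> y = w @ Z k \<and> cond r k w \<omega>)"

lemma reach_Inv:
  assumes "(open_arrow \<omega>)\<^sup>*\<^sup>* (Z r) y"
  shows "Inv r \<omega> y"
  using assms
proof (induction rule: rtranclp_induct)
  case base
  show ?case unfolding Inv_def Param_def cond_def
    by (rule exI[of _ r], rule exI[of _ "[]"]) simp
next
  case (step y y')
  from step.IH obtain k w where kw: "(k,w) \<in> Param r" "y = w @ Z k" "cond r k w \<omega>"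
    unfolding Inv_def by blast
  from step.hyps(2) consider
      (down) i where "y' = i # y" "y' \<in> gw_tree \<omega>" "down_open \<omega> y'"
    | (up) i where "y = i # y'" "y \<in> gw_tree \<omega>" "up_open \<omega> y"
    unfolding open_arrow_def by blast
  then show ?case
  proof cases
    case down
    have io: "i < offs \<omega> y" using down tree_parent by blast
    show ?thesis
    proof (cases "w = [] \<and> k < r \<and> i = 0")
      case True
      then show ?thesis unfolding Inv_def
        using kw down
        by (intro exI[of _ "Suc k"] exI[of _ "[]"]) (auto simp: Param_def cond_def)
    next
      case False
      then have "(k, i # w) \<in> Param r" using kw(1) by (auto simp: Param_def)
      moreover have "cond r k (i # w) \<omega>" using kw down io by (auto simp: cond_def)
      moreover have "y' = (i # w) @ Z k" using kw down by simp
      ultimately show ?thesis unfolding Inv_def by blast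
    qed
  next
    case up
    show ?thesis
    proof (cases w)
      case Nil
      then obtain k' where k': "k = Suc k'" "i = 0" "y' = Z k'" using kw up
        by (cases k) auto
      have "up_open \<omega> (Z j)" if j: "k' < j" "j \<le> r" for j
      proof (cases "j = Suc k'")
        case True then show ?thesis using up k' kw by simp
      next
        case False then have "j \<in> {k<..r}" using j k' by auto
        then show ?thesis using kw(3) unfolding cond_def by blast
      qed
      then have "cond r k' [] \<omega>" unfolding cond_def by auto
      then show ?thesis unfolding Inv_def using kw k' Nil
        by (intro exI[of _ k'] exI[of _ "[]"]) (auto simp: Param_def)
    next
      case (Cons a w')
      have "(k, w') \<in> Param r" using kw Cons by (auto simp: Param_def split: if_splits)
      moreover have "cond r k w' \<omega>" using kw Cons by (auto simp: cond_def)
      moreover have "y' = w' @ Z k" using kw up Cons by simp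
      ultimately show ?thesis unfolding Inv_def by blast
    qed
  qed
qed

lemma Param_inj:
  assumes "(k,w) \<in> Param r" "(k',w') \<in> Param r" "w @ Z k = w' @ Z k'"
  shows "k = k' \<and> w = w'"
proof -
  have main: "k = k' \<and> w = w'" if A: "(k,w) \<in> Param r" "(k',w') \<in> Param r" "w @ Z k = w' @ Z k'" "k \<le> k'"
    for k w k' w'
  proof (cases "k = k'")
    case True then show ?thesis using A by simp
  next
    case False
    then have lt: "k < k'" using A by simp
    have "Z k' = Z (k' - k) @ Z k" using lt by (simp add: replicate_add[symmetric])
    then have "w = w' @ Z (k' - k)" using A(3) by simp
    then have "w \<noteq> [] \<and> last w = 0" using lt by simp
    moreover have "k < r" using lt A(2) by (simp add: Param_def)
    ultimately show ?thesis using A(1) by (simp add: Param_def)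
  qed
  show ?thesis
  proof (cases "k \<le> k'")
    case True then show ?thesis using main assms by blast
  next
    case False then show ?thesis using main[of k' w' k w] assms by auto
  qed
qed

lemma Param_surj: "\<exists>k w. (k,w) \<in> Param r \<and> y = w @ Z k"
proof (induction y)
  case Nil then show ?case by (intro exI[of _ 0] exI[of _ "[]"]) (simp add: Param_def)
next
  case (Cons a y)
  then obtain k w where kw: "(k,w) \<in> Param r" "y = w @ Z k" by blast
  show ?case
  proof (cases "w = [] \<and> k < r \<and> a = 0")
    case True then show ?thesis using kw
      by (intro exI[of _ "Suc k"] exI[of _ "[]"]) (auto simp: Param_def)
  next
    case False then show ?thesis using kw
      by (intro exI[of _ k] exI[of _ "a # w"]) (auto simp: Param_def)
  qed
qed

lemma bij_Param: "bij_betw (\<lambda>(k,w). w @ Z k) (Param r) UNIV"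
proof -
  have "inj_on (\<lambda>(k,w). w @ Z k) (Param r)"
  proof (rule inj_onI)
    fix a b assume "a \<in> Param r" "b \<in> Param r" "(\<lambda>(k,w). w @ Z k) a = (\<lambda>(k,w). w @ Z k) b"
    then show "a = b" using Param_inj[of "fst a" "snd a" r "fst b" "snd b"] by (cases a, cases b) auto
  qed
  moreover have "(\<lambda>(k,w). w @ Z k) ` Param r = UNIV"
  proof (intro set_eqI iffI)
    fix y :: "nat list" assume "y \<in> UNIV"
    obtain k w where "(k,w) \<in> Param r" "y = w @ Z k" using Param_surj by blast
    then show "y \<in> (\<lambda>(k,w). w @ Z k) ` Param r" by (auto intro: image_eqI[of _ _ "(k,w)"])
  qed auto
  ultimately show ?thesis unfolding bij_betw_def by blast
qed

lemma cluster_iff: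
  assumes "Z r \<in> gw_tree \<omega>" "(k,w) \<in> Param r"
  shows "w @ Z k \<in> cluster \<omega> (Z r) \<longleftrightarrow> cond r k w \<omega>"
proof
  assume "w @ Z k \<in> cluster \<omega> (Z r)"
  then have "Inv r \<omega> (w @ Z k)" unfolding cluster_def by (auto intro: reach_Inv)
  then obtain k' w' where "(k',w') \<in> Param r" "w @ Z k = w' @ Z k'" "cond r k' w' \<omega>"
    unfolding Inv_def by blast
  then show "cond r k w \<omega>" using Param_inj[OF assms(2)] by blast
next
  assume "cond r k w \<omega>"
  then show "w @ Z k \<in> cluster \<omega> (Z r)" unfolding cluster_def
    using cond_reach assms by (auto simp: Param_def)
qed


abbreviation QQ :: "nat pmf \<Rightarrow> real \<Rightarrow> real \<Rightarrow> (nat \<times> bool \<times> bool) pmf" where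
  "QQ P p q \<equiv> pair_pmf P (pair_pmf (bernoulli_pmf p) (bernoulli_pmf q))"

lemma space_gw: "space (gw_perc P p q) = UNIV"
  by (simp add: gw_perc_def space_PiM)

lemma prod_collect:
  assumes "finite J"
  shows "{\<omega>. \<forall>v\<in>J. \<omega> v \<in> X v} \<in> sets (gw_perc P p q)"
    "emeasure (gw_perc P p q) {\<omega>. \<forall>v\<in>J. \<omega> v \<in> X v} = (\<Prod>v\<in>J. emeasure (measure_pmf (QQ P p q)) (X v))"
proof -
  interpret product_prob_space "\<lambda>_. measure_pmf (QQ P p q)" UNIV
    by unfold_locales
  have eq: "{\<omega>. \<forall>v\<in>J. \<omega> v \<in> X v} = {x \<in> space (gw_perc P p q). \<forall>i\<in>J. x i \<in> X i}"
    by (simp add: space_gw)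
  have eq2: "{x \<in> space (gw_perc P p q). \<forall>i\<in>J. x i \<in> X i}
     = prod_emb UNIV (\<lambda>_. measure_pmf (QQ P p q)) J (Pi\<^sub>E J X)"
    unfolding prod_emb_def by (auto simp: space_gw space_PiM Pi_iff)
  have "prod_emb UNIV (\<lambda>_. measure_pmf (QQ P p q)) J (Pi\<^sub>E J X) \<in> sets (PiM UNIV (\<lambda>_. measure_pmf (QQ P p q)))"
    using assms by (intro measurable_prod_emb sets_PiM_I_finite) auto
  then show "{\<omega>. \<forall>v\<in>J. \<omega> v \<in> X v} \<in> sets (gw_perc P p q)"
    using eq eq2 by (simp add: gw_perc_def)
  show "emeasure (gw_perc P p q) {\<omega>. \<forall>v\<in>J. \<omega> v \<in> X v} = (\<Prod>v\<in>J. emeasure (measure_pmf (QQ P p q)) (X v))"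
    unfolding eq unfolding gw_perc_def
    using assms by (intro emeasure_PiM_Collect) auto
qed

lemma prod_collect_inj:
  assumes "finite I" "inj_on g I"
  shows "{\<omega>. \<forall>a\<in>I. \<omega> (g a) \<in> B a} \<in> sets (gw_perc P p q)"
    "emeasure (gw_perc P p q) {\<omega>. \<forall>a\<in>I. \<omega> (g a) \<in> B a} = (\<Prod>a\<in>I. emeasure (measure_pmf (QQ P p q)) (B a))"
proof -
  define X where "X v = B (the_inv_into I g v)" for v
  have eq: "{\<omega>. \<forall>a\<in>I. \<omega> (g a) \<in> B a} = {\<omega>. \<forall>v\<in>g ` I. \<omega> v \<in> X v}"
    using assms by (auto simp: X_def the_inv_into_f_f)
  show "{\<omega>. \<forall>a\<in>I. \<omega> (g a) \<in> B a} \<in> sets (gw_perc P p q)"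
    unfolding eq using assms by (intro prod_collect) auto
  have "emeasure (gw_perc P p q) {\<omega>. \<forall>a\<in>I. \<omega> (g a) \<in> B a}
      = (\<Prod>v\<in>g ` I. emeasure (measure_pmf (QQ P p q)) (X v))"
    unfolding eq using assms by (intro prod_collect) auto
  also have "\<dots> = (\<Prod>a\<in>I. emeasure (measure_pmf (QQ P p q)) (B a))"
    using assms by (subst prod.reindex) (auto simp: X_def the_inv_into_f_f)
  finally show "emeasure (gw_perc P p q) {\<omega>. \<forall>a\<in>I. \<omega> (g a) \<in> B a} = (\<Prod>a\<in>I. emeasure (measure_pmf (QQ P p q)) (B a))" .
qed

lemma emeasure_QQ:
  assumes "0 \<le> p" "p \<le> 1" "0 \<le> q" "q \<le> 1"
  shows "emeasure (measure_pmf (QQ P p q)) (A \<times> B \<times> C)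
     = ennreal (measure_pmf.prob P A * measure_pmf.prob (bernoulli_pmf p) B * measure_pmf.prob (bernoulli_pmf q) C)"
  by (simp add: measure_pmf.emeasure_eq_measure measure_pmf_prob_product)

lemma bern_True: "0 \<le> p \<Longrightarrow> p \<le> 1 \<Longrightarrow> measure_pmf.prob (bernoulli_pmf p) {True} = p"
  by (simp add: measure_pmf_single)


definition TT :: "nat pmf \<Rightarrow> nat \<Rightarrow> real" where
  "TT P i = measure_pmf.prob P {n. i < n}"

definition hr :: "nat pmf \<Rightarrow> real \<Rightarrow> nat list \<Rightarrow> real" where
  "hr P p w = prod_list (map (\<lambda>i. p * TT P i) w)"

definition Ix :: "nat \<Rightarrow> nat \<Rightarrow> nat list \<Rightarrow> (nat + nat) set" where
  "Ix r k w = Inl ` {k<..r} \<union> Inr ` {..length w}"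

definition gx :: "nat \<Rightarrow> nat list \<Rightarrow> nat + nat \<Rightarrow> nat list" where
  "gx k w = case_sum (\<lambda>j. Z j) (\<lambda>d. drop d w @ Z k)"

definition Bx :: "nat list \<Rightarrow> nat + nat \<Rightarrow> (nat \<times> bool \<times> bool) set" where
  "Bx w = case_sum (\<lambda>j. UNIV \<times> UNIV \<times> {True})
     (\<lambda>d. (if 0 < d then {n. w!(d-1) < n} else UNIV) \<times> (if d < length w then {True} else UNIV) \<times> UNIV)"

lemma all_le_Suc: "(\<forall>d\<le>Suc n. P d) = (P 0 \<and> (\<forall>d\<le>n. P (Suc d)))"
  by (metis Suc_le_mono not0_implies_Suc zero_le)

lemma dpath_idx:
  "dpath \<omega> w z \<longleftrightarrow> (\<forall>d\<le>length w. (d < length w \<longrightarrow> down_open \<omega> (drop d w @ z))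
        \<and> (0 < d \<longrightarrow> w!(d-1) < offs \<omega> (drop d w @ z)))"
proof (induction w)
  case Nil then show ?case by simp
next
  case (Cons i w)
  have "(\<forall>d\<le>length (i#w). (d < length (i#w) \<longrightarrow> down_open \<omega> (drop d (i#w) @ z))
        \<and> (0 < d \<longrightarrow> (i#w)!(d-1) < offs \<omega> (drop d (i#w) @ z)))
    \<longleftrightarrow> down_open \<omega> (i#w@z) \<and> (\<forall>d\<le>length w. (d < length w \<longrightarrow> down_open \<omega> (drop d w @ z))
        \<and> (i#w)!d < offs \<omega> (drop d w @ z))"
    by (simp only: length_Cons all_le_Suc) simp
  also have "\<dots> \<longleftrightarrow> down_open \<omega> (i#w@z) \<and> i < offs \<omega> (w @ z) \<and> dpath \<omega> w z"
    unfolding Cons.IH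
  proof (intro iffI conjI)
    assume H: "down_open \<omega> (i # w @ z) \<and> (\<forall>d\<le>length w. (d < length w \<longrightarrow> down_open \<omega> (drop d w @ z))
        \<and> (i#w)!d < offs \<omega> (drop d w @ z))"
    then show "down_open \<omega> (i # w @ z)" by blast
    from H have "(i#w)!0 < offs \<omega> (drop 0 w @ z)" by blast
    then show "i < offs \<omega> (w @ z)" by simp
    show "\<forall>d\<le>length w. (d < length w \<longrightarrow> down_open \<omega> (drop d w @ z))
        \<and> (0 < d \<longrightarrow> w!(d-1) < offs \<omega> (drop d w @ z))"
    proof (intro allI impI conjI)
      fix d assume d: "d \<le> length w"
      then show "d < length w \<Longrightarrow> down_open \<omega> (drop d w @ z)" using H by blast
      assume "0 < d"
      then have "(i#w)!d = w!(d-1)" by (simp add: nth_Cons')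
      then show "w!(d-1) < offs \<omega> (drop d w @ z)" using H d by metis
    qed
  next
    assume H: "down_open \<omega> (i # w @ z) \<and> i < offs \<omega> (w @ z) \<and> (\<forall>d\<le>length w. (d < length w \<longrightarrow> down_open \<omega> (drop d w @ z))
        \<and> (0 < d \<longrightarrow> w!(d-1) < offs \<omega> (drop d w @ z)))"
    then show "down_open \<omega> (i # w @ z)" by blast
    show "\<forall>d\<le>length w. (d < length w \<longrightarrow> down_open \<omega> (drop d w @ z))
        \<and> (i#w)!d < offs \<omega> (drop d w @ z)"
    proof (intro allI impI conjI)
      fix d assume d: "d \<le> length w"
      then show "d < length w \<Longrightarrow> down_open \<omega> (drop d w @ z)" using H by blast
      show "(i#w)!d < offs \<omega> (drop d w @ z)"
      proof (cases d)
        case 0 then show ?thesis using H by simp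
      next
        case (Suc e)
        then have "w!(Suc e - 1) < offs \<omega> (drop (Suc e) w @ z)" using H d by blast
        then show ?thesis using Suc by simp
      qed
    qed
  qed
  finally show ?case by auto
qed

lemma ball_img: "(\<forall>a\<in>f`A. P a) = (\<forall>x\<in>A. P (f x))" by blast

lemma hr_nonneg: "0 \<le> p \<Longrightarrow> 0 \<le> hr P p w"
  unfolding hr_def by (induction w) (auto simp: TT_def)

lemma cond_idx:
  "cond r k w \<omega> \<longleftrightarrow> (\<forall>a\<in>Ix r k w. \<omega> (gx k w a) \<in> Bx w a)"
proof -
  have 1: "(\<forall>a\<in>Ix r k w. \<omega> (gx k w a) \<in> Bx w a) \<longleftrightarrow> (\<forall>j\<in>{k<..r}. \<omega> (Z j) \<in> UNIV \<times> UNIV \<times> {True})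
     \<and> (\<forall>d\<in>{..length w}. \<omega> (drop d w @ Z k) \<in> (if 0 < d then {n. w!(d-1) < n} else UNIV) \<times> (if d < length w then {True} else UNIV) \<times> UNIV)"
    unfolding Ix_def ball_Un ball_img by (simp add: gx_def Bx_def)
  have 2: "\<omega> v \<in> UNIV \<times> UNIV \<times> {True} \<longleftrightarrow> up_open \<omega> v" for v
    by (simp add: mem_Times_iff up_open_def)
  have 3: "\<omega> v \<in> (if 0 < d then {n. w!(d-1) < n} else UNIV) \<times> (if d < length w then {True} else UNIV) \<times> UNIV
     \<longleftrightarrow> (d < length w \<longrightarrow> down_open \<omega> v) \<and> (0 < d \<longrightarrow> w!(d-1) < offs \<omega> v)" for v d
    by (auto simp: mem_Times_iff down_open_def offs_def)
  show ?thesis unfolding 1 2 3 cond_def dpath_idx atMost_iff by blast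
qed

lemma inj_gx:
  assumes "(k,w) \<in> Param r"
  shows "inj_on (gx k w) (Ix r k w)"
proof (rule inj_onI)
  fix a b assume a: "a \<in> Ix r k w" and b: "b \<in> Ix r k w" and e: "gx k w a = gx k w b"
  have cross: False if j: "k < j" "j \<le> r" and d: "d \<le> length w" and e: "Z j = drop d w @ Z k" for j d
  proof -
    have "k < r" using j by auto
    then have wl: "w = [] \<or> last w \<noteq> 0" using assms by (auto simp: Param_def)
    have "Z j = Z (j - k) @ Z k" using j by (simp add: replicate_add[symmetric])
    then have dw: "drop d w = Z (j - k)" using e by simp
    then have "drop d w \<noteq> []" using j by auto
    then have "w \<noteq> [] \<and> last w = last (drop d w)" by (auto simp: last_drop)
    then show False using dw wl j by auto
  qed
  show "a = b"
  proof (cases a)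
    case (Inl j)
    show ?thesis
    proof (cases b)
      case (Inl j') then show ?thesis using e \<open>a = Inl j\<close> by (simp add: gx_def)
    next
      case (Inr d')
      have "Z j = drop d' w @ Z k" using e \<open>a = Inl j\<close> Inr by (simp add: gx_def)
      moreover have "k < j" "j \<le> r" "d' \<le> length w" using a b \<open>a = Inl j\<close> Inr by (auto simp: Ix_def)
      ultimately show ?thesis using cross by blast
    qed
  next
    case (Inr d)
    show ?thesis
    proof (cases b)
      case (Inl j')
      have "Z j' = drop d w @ Z k" using e \<open>a = Inr d\<close> Inl by (simp add: gx_def)
      moreover have "k < j'" "j' \<le> r" "d \<le> length w" using a b \<open>a = Inr d\<close> Inl by (auto simp: Ix_def)
      ultimately show ?thesis using cross by blast
    next
      case (Inr d')
      have "length (drop d w @ Z k) = length (drop d' w @ Z k)" using e \<open>a = Inr d\<close> Inr by (simp add: gx_def)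
      then have "d = d'" using a b \<open>a = Inr d\<close> Inr by (auto simp: Ix_def)
      then show ?thesis using \<open>a = Inr d\<close> Inr by simp
    qed
  qed
qed

lemma prod_list_nth: "prod_list (map f w) = (\<Prod>d<length w. f (w!d))"
proof (induction w)
  case Nil then show ?case by simp
next
  case (Cons a w) then show ?case by (simp only: list.map prod_list.Cons length_Cons prod.lessThan_Suc_shift) simp
qed

lemma hr_prod:
  "(\<Prod>d\<in>{..length w}. (if 0 < d then TT P (w!(d-1)) else 1) * (if d < length w then p else 1)) = hr P p w"
proof -
  have 1: "(\<Prod>d\<in>{..length w}. (if 0 < d then TT P (w!(d-1)) else 1)) = (\<Prod>d<length w. TT P (w!d))"
    unfolding lessThan_Suc_atMost[symmetric] prod.lessThan_Suc_shift by simp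
  have 2: "(\<Prod>d\<in>{..length w}. (if d < length w then p else 1)) = p ^ length w"
    unfolding lessThan_Suc_atMost[symmetric] by (simp add: prod.lessThan_Suc)
  show ?thesis unfolding prod.distrib 1 2 hr_def prod_list_nth by (simp add: prod.distrib)
qed

lemma meas_cond:
  assumes "(k,w) \<in> Param r" and pq: "0 \<le> p" "p \<le> 1" "0 \<le> q" "q \<le> 1"
  shows "{\<omega>. cond r k w \<omega>} \<in> sets (gw_perc P p q)"
    "emeasure (gw_perc P p q) {\<omega>. cond r k w \<omega>} = ennreal (q ^ (r - k) * hr P p w)"
proof -
  have fin: "finite (Ix r k w)" by (simp add: Ix_def)
  have eq: "{\<omega>. cond r k w \<omega>} = {\<omega>. \<forall>a\<in>Ix r k w. \<omega> (gx k w a) \<in> Bx w a}"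
    by (simp add: cond_idx)
  show "{\<omega>. cond r k w \<omega>} \<in> sets (gw_perc P p q)"
    unfolding eq by (rule prod_collect_inj[OF fin inj_gx[OF assms(1)]])
  have "emeasure (gw_perc P p q) {\<omega>. cond r k w \<omega>} = (\<Prod>a\<in>Ix r k w. emeasure (measure_pmf (QQ P p q)) (Bx w a))"
    unfolding eq by (rule prod_collect_inj[OF fin inj_gx[OF assms(1)]])
  also have "\<dots> = (\<Prod>j\<in>{k<..r}. emeasure (measure_pmf (QQ P p q)) (Bx w (Inl j)))
      * (\<Prod>d\<in>{..length w}. emeasure (measure_pmf (QQ P p q)) (Bx w (Inr d)))"
    unfolding Ix_def
    by (subst prod.union_disjoint) (auto simp: prod.reindex)
  also have "(\<Prod>j\<in>{k<..r}. emeasure (measure_pmf (QQ P p q)) (Bx w (Inl j))) = (\<Prod>j\<in>{k<..r}. ennreal q)"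
    unfolding Bx_def using pq by (intro prod.cong refl) (simp add: emeasure_QQ bern_True)
  also have "\<dots> = ennreal (q ^ (r - k))" using pq by (simp add: ennreal_power)
  also have "(\<Prod>d\<in>{..length w}. emeasure (measure_pmf (QQ P p q)) (Bx w (Inr d)))
     = (\<Prod>d\<in>{..length w}. ennreal ((if 0 < d then TT P (w!(d-1)) else 1) * (if d < length w then p else 1)))"
    unfolding Bx_def using pq by (intro prod.cong refl) (simp add: emeasure_QQ bern_True TT_def)
  also have "\<dots> = ennreal (hr P p w)"
    using pq by (subst prod_ennreal) (auto simp: hr_prod TT_def)
  finally show "emeasure (gw_perc P p q) {\<omega>. cond r k w \<omega>} = ennreal (q ^ (r - k) * hr P p w)"
    using pq hr_nonneg[of p P w] by (simp add: ennreal_mult)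
qed

lemma tree_of_offs: "(\<forall>j<r. 0 < offs \<omega> (Z j)) \<Longrightarrow> Z r \<in> gw_tree \<omega>"
  by (induction r) (auto intro: gw_tree.intros)

lemma AE_tree:
  assumes "pmf P 0 = 0" "0 \<le> p" "p \<le> 1" "0 \<le> q" "q \<le> 1"
  shows "AE \<omega> in gw_perc P p q. Z r \<in> gw_tree \<omega>"
proof -
  interpret prob_space "gw_perc P p q" unfolding gw_perc_def by (intro prob_space_PiM) (simp add: measure_pmf.prob_space_axioms)
  have inj: "inj_on Z {..<r}" by (auto simp: inj_on_def)
  let ?A = "{\<omega>. \<forall>j\<in>{..<r}. \<omega> (Z j) \<in> {n. 0 < n} \<times> UNIV \<times> UNIV}"
  have P1: "measure_pmf.prob P {n. 0 < n} = 1"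
  proof -
    have "{n::nat. 0 < n} = UNIV - {0}" by auto
    moreover have "measure_pmf.prob P (UNIV - {0}) = 1 - measure_pmf.prob P {0}"
      using measure_pmf.prob_compl[of "{0}" P] by simp
    ultimately show ?thesis using assms(1) by (simp add: measure_pmf_single)
  qed
  have "emeasure (gw_perc P p q) ?A = (\<Prod>j\<in>{..<r}. emeasure (measure_pmf (QQ P p q)) ({n. 0 < n} \<times> UNIV \<times> UNIV))"
    by (rule prod_collect_inj[OF _ inj]) simp
  also have "\<dots> = (\<Prod>j\<in>{..<r}. 1)"
  proof (intro prod.cong refl)
    show "emeasure (measure_pmf (QQ P p q)) ({n. 0 < n} \<times> UNIV \<times> UNIV) = 1"
      using emeasure_QQ[of p q P "{n. 0<n}" UNIV UNIV] assms P1 by simp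
  qed
  also have "\<dots> = 1" by simp
  finally have "prob ?A = 1" by (simp add: emeasure_eq_measure)
  then have "AE \<omega> in gw_perc P p q. \<omega> \<in> ?A" by (rule AE_prob_1)
  then show ?thesis
    by eventually_elim (auto intro!: tree_of_offs simp: offs_def mem_Times_iff)
qed


lemma nn_sigma:
  fixes f :: "'a::countable \<times> 'b::countable \<Rightarrow> ennreal"
  shows "(\<integral>\<^sup>+z. f z \<partial>count_space UNIV) = (\<integral>\<^sup>+a. \<integral>\<^sup>+b. f (a,b) \<partial>count_space UNIV \<partial>count_space UNIV)"
proof -
  have e: "f z = (\<integral>\<^sup>+a. \<integral>\<^sup>+b. f (a,b) * indicator {(a,b)} z \<partial>count_space UNIV \<partial>count_space UNIV)" for z
  proof (cases z)
    case (Pair a0 b0)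
    have i: "(\<integral>\<^sup>+b. f (a,b) * indicator {(a,b)} z \<partial>count_space UNIV) = f (a, b0) * indicator {a0} a" for a
    proof -
      have "(\<integral>\<^sup>+b. f (a,b) * indicator {(a,b)} z \<partial>count_space UNIV)
          = (\<integral>\<^sup>+b. (f (a,b) * indicator {a0} a) * indicator {b0} b \<partial>count_space UNIV)"
        using Pair by (intro nn_integral_cong) (auto simp: indicator_def)
      also have "\<dots> = f (a, b0) * indicator {a0} a" by simp
      finally show ?thesis .
    qed
    have "(\<integral>\<^sup>+a. f (a, b0) * indicator {a0} a \<partial>count_space UNIV) = f z" using Pair by simp
    then show ?thesis by (simp add: i)
  qed
  have "(\<integral>\<^sup>+z. f z \<partial>count_space UNIV)
     = (\<integral>\<^sup>+z. \<integral>\<^sup>+a. \<integral>\<^sup>+b. f (a,b) * indicator {(a,b)} z \<partial>count_space UNIV \<partial>count_space UNIV \<partial>count_space UNIV)"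
    by (subst e) (rule refl)
  also have "\<dots> = (\<integral>\<^sup>+a. \<integral>\<^sup>+z. \<integral>\<^sup>+b. f (a,b) * indicator {(a,b)} z \<partial>count_space UNIV \<partial>count_space UNIV \<partial>count_space UNIV)"
    by (rule nn_integral_count_space_nn_integral) auto
  also have "\<dots> = (\<integral>\<^sup>+a. \<integral>\<^sup>+b. \<integral>\<^sup>+z. f (a,b) * indicator {(a,b)} z \<partial>count_space UNIV \<partial>count_space UNIV \<partial>count_space UNIV)"
    by (intro nn_integral_cong nn_integral_count_space_nn_integral) auto
  also have "\<dots> = (\<integral>\<^sup>+a. \<integral>\<^sup>+b. f (a,b) \<partial>count_space UNIV \<partial>count_space UNIV)"
    by simp
  finally show ?thesis .
qed

lemma hr_Nil[simp]: "hr P p [] = 1" by (simp add: hr_def)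
lemma hr_Cons[simp]: "hr P p (i # w) = p * TT P i * hr P p w" by (simp add: hr_def)
lemma hr_snoc: "hr P p (w @ [i]) = hr P p w * (p * TT P i)" by (simp add: hr_def)
lemma TT_nonneg: "0 \<le> TT P i" by (simp add: TT_def)

lemma Lm:
  assumes "0 \<le> p"
  shows "(\<integral>\<^sup>+w. ennreal (hr P p w) * indicator {w. length w = m} w \<partial>count_space UNIV)
    = (\<integral>\<^sup>+i. ennreal (p * TT P i) \<partial>count_space UNIV) ^ m"
proof (induction m)
  case 0
  have "{w::nat list. length w = 0} = {[]}" by auto
  then show ?case by simp
next
  case (Suc m)
  let ?c = "\<integral>\<^sup>+i. ennreal (p * TT P i) \<partial>count_space UNIV"
  have bij: "bij_betw (\<lambda>(i,u). i # u) (UNIV \<times> {u::nat list. length u = m}) {w. length w = Suc m}"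
  proof -
    have "inj_on (\<lambda>(i,u). i # u) (UNIV \<times> {u::nat list. length u = m})" by (auto simp: inj_on_def)
    moreover have "(\<lambda>(i,u). i # u) ` (UNIV \<times> {u::nat list. length u = m}) = {w. length w = Suc m}"
    proof (intro set_eqI iffI)
      fix w :: "nat list" assume "w \<in> {w. length w = Suc m}"
      then obtain i u where "w = i # u" "length u = m" by (cases w) auto
      then show "w \<in> (\<lambda>(i,u). i # u) ` (UNIV \<times> {u::nat list. length u = m})" by force
    qed auto
    ultimately show ?thesis by (simp add: bij_betw_def)
  qed
  have "(\<integral>\<^sup>+w. ennreal (hr P p w) * indicator {w. length w = Suc m} w \<partial>count_space UNIV)
      = (\<integral>\<^sup>+w. ennreal (hr P p w) \<partial>count_space {w. length w = Suc m})"
    by (simp add: nn_integral_count_space_indicator)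
  also have "\<dots> = (\<integral>\<^sup>+z. ennreal (hr P p ((\<lambda>(i,u). i # u) z)) \<partial>count_space (UNIV \<times> {u::nat list. length u = m}))"
    by (rule nn_integral_bij_count_space[OF bij, symmetric])
  also have "\<dots> = (\<integral>\<^sup>+z. ennreal (hr P p ((\<lambda>(i,u). i # u) z)) * indicator (UNIV \<times> {u::nat list. length u = m}) z \<partial>count_space UNIV)"
    by (simp add: nn_integral_count_space_indicator)
  also have "\<dots> = (\<integral>\<^sup>+i. \<integral>\<^sup>+u. ennreal (p * TT P i) * (ennreal (hr P p u) * indicator {u. length u = m} u) \<partial>count_space UNIV \<partial>count_space UNIV)"
    by (subst nn_sigma) (intro nn_integral_cong, auto simp: indicator_def ennreal_mult assms TT_nonneg hr_nonneg mult.assoc)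
  also have "\<dots> = (\<integral>\<^sup>+i. ennreal (p * TT P i) * ?c ^ m \<partial>count_space UNIV)"
    by (simp add: nn_integral_cmult Suc)
  also have "\<dots> = ?c ^ Suc m"
    by (simp add: nn_integral_multc mult.commute)
  finally show ?case .
qed

lemma G_sum:
  assumes "0 \<le> p"
  shows "(\<integral>\<^sup>+w. ennreal (hr P p w) \<partial>count_space UNIV)
    = (\<Sum>m. (\<integral>\<^sup>+i. ennreal (p * TT P i) \<partial>count_space UNIV) ^ m)"
proof -
  have "ennreal (hr P p w) = (\<Sum>m. ennreal (hr P p w) * indicator {w. length w = m} w)" for w
  proof -
    have "(\<lambda>m. ennreal (hr P p w) * indicator {w. length w = m} w) = (\<lambda>m. if m = length w then ennreal (hr P p w) else 0)"
      by (auto simp: indicator_def)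
    moreover have "(\<lambda>m. if m = length w then ennreal (hr P p w) else 0) sums ennreal (hr P p w)"
      using sums_single[of "length w" "\<lambda>_. ennreal (hr P p w)"] by simp
    ultimately show ?thesis by (simp add: sums_iff)
  qed
  then have "(\<integral>\<^sup>+w. ennreal (hr P p w) \<partial>count_space UNIV)
      = (\<integral>\<^sup>+w. (\<Sum>m. ennreal (hr P p w) * indicator {w. length w = m} w) \<partial>count_space UNIV)"
    by simp
  also have "\<dots> = (\<Sum>m. \<integral>\<^sup>+w. ennreal (hr P p w) * indicator {w. length w = m} w \<partial>count_space UNIV)"
    by (rule nn_integral_suminf) auto
  also have "\<dots> = (\<Sum>m. (\<integral>\<^sup>+i. ennreal (p * TT P i) \<partial>count_space UNIV) ^ m)"
    using Lm[OF assms] by simp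
  finally show ?thesis .
qed

lemma geo_lt:
  assumes "0 \<le> a" "a < 1"
  shows "(\<Sum>m. ennreal a ^ m) = ennreal (1 / (1 - a))"
proof -
  have "(\<Sum>m. ennreal a ^ m) = (\<Sum>m. ennreal (a ^ m))" using assms by (simp add: ennreal_power)
  also have "\<dots> = ennreal (\<Sum>m. a ^ m)"
    using assms by (intro suminf_ennreal2) (auto intro: summable_geometric)
  also have "\<dots> = ennreal (1 / (1 - a))" using assms by (simp add: suminf_geometric)
  finally show ?thesis .
qed

lemma geo_ge:
  assumes "1 \<le> a"
  shows "(\<Sum>m. ennreal a ^ m) = \<infinity>"
proof (rule ccontr)
  let ?S = "\<Sum>m. ennreal a ^ m"
  assume "?S \<noteq> \<infinity>"
  then obtain s where s: "?S = ennreal s" "0 \<le> s" by (cases ?S) auto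
  have "ennreal (real n) \<le> ?S" for n
  proof -
    have "ennreal (real n) = (\<Sum>m<n. (1::ennreal))" by (simp add: ennreal_of_nat_eq_real_of_nat)
    also have "\<dots> \<le> (\<Sum>m<n. ennreal a ^ m)"
      using assms by (intro sum_mono) (simp add: one_le_power)
    also have "\<dots> \<le> ?S" by (intro sum_le_suminf) auto
    finally show ?thesis .
  qed
  then have "real n \<le> s" for n using s by (metis ennreal_le_iff)
  moreover obtain n where "s < real n" using reals_Archimedean2 by blast
  ultimately show False by (meson not_le)
qed

lemma TT0: "pmf P 0 = 0 \<Longrightarrow> TT P 0 = 1"
proof -
  assume a: "pmf P 0 = 0"
  have "{n::nat. 0 < n} = UNIV - {0}" by auto
  moreover have "measure_pmf.prob P (UNIV - {0}) = 1 - measure_pmf.prob P {0}"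
    using measure_pmf.prob_compl[of "{0}" P] by simp
  ultimately show ?thesis using a by (simp add: measure_pmf_single TT_def)
qed

lemma mu_sum:
  assumes "summable (\<lambda>k. real k * pmf P k)"
  shows "(\<integral>\<^sup>+i. ennreal (TT P i) \<partial>count_space UNIV) = ennreal (\<Sum>k. real k * pmf P k)"
proof -
  have "(\<integral>\<^sup>+i. ennreal (TT P i) \<partial>count_space UNIV) = (\<Sum>i. \<integral>\<^sup>+n. indicator {n. i < n} n \<partial>measure_pmf P)"
    by (simp add: nn_integral_count_space_nat TT_def measure_pmf.emeasure_eq_measure[symmetric])
  also have "\<dots> = (\<integral>\<^sup>+n. (\<Sum>i. indicator {n. i < n} n) \<partial>measure_pmf P)"
    by (rule nn_integral_suminf[symmetric]) auto
  also have "\<dots> = (\<integral>\<^sup>+n. ennreal (real n) \<partial>measure_pmf P)"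
  proof (intro nn_integral_cong)
    fix n :: nat
    have "(\<lambda>i. if i < n then (1::ennreal) else 0) sums (\<Sum>i | i < n. 1)"
      by (rule sums_If_finite) simp
    moreover have "(\<lambda>i. indicator {n. i < n} n :: ennreal) = (\<lambda>i. if i < n then 1 else 0)"
      by (auto simp: indicator_def)
    ultimately show "(\<Sum>i. indicator {n. i < n} n) = ennreal (real n)"
      by (simp add: sums_iff ennreal_of_nat_eq_real_of_nat)
  qed
  also have "\<dots> = (\<Sum>n. ennreal (real n * pmf P n))"
    by (simp add: nn_integral_measure_pmf nn_integral_count_space_nat ennreal_mult' mult.commute)
  also have "\<dots> = ennreal (\<Sum>k. real k * pmf P k)"
    using assms by (intro suminf_ennreal2) auto
  finally show ?thesis .
qed


lemma SW:
  assumes "0 \<le> p"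
  shows "(\<integral>\<^sup>+w. ennreal (hr P p w) * indicator {w. w = [] \<or> last w \<noteq> 0} w \<partial>count_space UNIV)
    = 1 + (\<integral>\<^sup>+w. ennreal (hr P p w) \<partial>count_space UNIV) * (\<integral>\<^sup>+i. ennreal (p * TT P i) * indicator {i. i \<noteq> 0} i \<partial>count_space UNIV)"
proof -
  let ?W1 = "{w::nat list. w \<noteq> [] \<and> last w \<noteq> 0}"
  have "(\<integral>\<^sup>+w. ennreal (hr P p w) * indicator {w. w = [] \<or> last w \<noteq> 0} w \<partial>count_space UNIV)
     = (\<integral>\<^sup>+w. ennreal (hr P p w) * indicator {[]} w + ennreal (hr P p w) * indicator ?W1 w \<partial>count_space UNIV)"
    by (intro nn_integral_cong) (auto simp: indicator_def)
  also have "\<dots> = (\<integral>\<^sup>+w. ennreal (hr P p w) * indicator {[]} w \<partial>count_space UNIV)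
      + (\<integral>\<^sup>+w. ennreal (hr P p w) * indicator ?W1 w \<partial>count_space UNIV)"
    by (rule nn_integral_add) auto
  also have "(\<integral>\<^sup>+w. ennreal (hr P p w) * indicator {[]} w \<partial>count_space UNIV) = 1" by simp
  also have bij: "bij_betw (\<lambda>(u,i). u @ [i]) (UNIV \<times> {i::nat. i \<noteq> 0}) ?W1"
  proof -
    have "inj_on (\<lambda>(u,i). u @ [i]) (UNIV \<times> {i::nat. i \<noteq> 0})" by (auto simp: inj_on_def)
    moreover have "(\<lambda>(u,i). u @ [i]) ` (UNIV \<times> {i::nat. i \<noteq> 0}) = ?W1"
    proof (intro set_eqI iffI)
      fix w :: "nat list" assume "w \<in> ?W1"
      then have "w = butlast w @ [last w]" "last w \<noteq> 0" by auto
      then show "w \<in> (\<lambda>(u,i). u @ [i]) ` (UNIV \<times> {i::nat. i \<noteq> 0})"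
        by (intro image_eqI[of _ _ "(butlast w, last w)"]) auto
    qed auto
    ultimately show ?thesis by (simp add: bij_betw_def)
  qed
  have "(\<integral>\<^sup>+w. ennreal (hr P p w) * indicator ?W1 w \<partial>count_space UNIV)
      = (\<integral>\<^sup>+w. ennreal (hr P p w) \<partial>count_space ?W1)"
    by (simp add: nn_integral_count_space_indicator)
  also have "\<dots> = (\<integral>\<^sup>+z. ennreal (hr P p ((\<lambda>(u,i). u @ [i]) z)) \<partial>count_space (UNIV \<times> {i::nat. i \<noteq> 0}))"
    by (rule nn_integral_bij_count_space[OF bij, symmetric])
  also have "\<dots> = (\<integral>\<^sup>+z. ennreal (hr P p ((\<lambda>(u,i). u @ [i]) z)) * indicator (UNIV \<times> {i::nat. i \<noteq> 0}) z \<partial>count_space UNIV)"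
    by (simp add: nn_integral_count_space_indicator)
  also have "\<dots> = (\<integral>\<^sup>+u. \<integral>\<^sup>+i. ennreal (hr P p u) * (ennreal (p * TT P i) * indicator {i. i \<noteq> 0} i) \<partial>count_space UNIV \<partial>count_space UNIV)"
    by (subst nn_sigma) (intro nn_integral_cong, auto simp: indicator_def ennreal_mult assms TT_nonneg hr_nonneg hr_snoc)
  also have "\<dots> = (\<integral>\<^sup>+w. ennreal (hr P p w) \<partial>count_space UNIV) * (\<integral>\<^sup>+i. ennreal (p * TT P i) * indicator {i. i \<noteq> 0} i \<partial>count_space UNIV)"
    by (simp add: nn_integral_cmult nn_integral_multc)
  finally show ?thesis by simp
qed

lemma c_split:
  assumes "pmf P 0 = 0"
  shows "(\<integral>\<^sup>+i. ennreal (p * TT P i) \<partial>count_space UNIV)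
    = ennreal p + (\<integral>\<^sup>+i. ennreal (p * TT P i) * indicator {i. i \<noteq> 0} i \<partial>count_space UNIV)"
proof -
  have "(\<integral>\<^sup>+i. ennreal (p * TT P i) \<partial>count_space UNIV)
    = (\<integral>\<^sup>+i. ennreal (p * TT P i) * indicator {0} i + ennreal (p * TT P i) * indicator {i. i \<noteq> 0} i \<partial>count_space UNIV)"
    by (intro nn_integral_cong) (auto simp: indicator_def)
  also have "\<dots> = (\<integral>\<^sup>+i. ennreal (p * TT P i) * indicator {0} i \<partial>count_space UNIV)
      + (\<integral>\<^sup>+i. ennreal (p * TT P i) * indicator {i. i \<noteq> 0} i \<partial>count_space UNIV)"
    by (rule nn_integral_add) auto
  finally show ?thesis using TT0[OF assms] by simp
qed

lemma geo_q:
  fixes q :: real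
  assumes "q \<noteq> 1"
  shows "(\<Sum>k<r. q ^ (r - k)) = q * ((1 - q ^ r) / (1 - q))"
proof (induction r)
  case 0 then show ?case by simp
next
  case (Suc r)
  have "(\<Sum>k<Suc r. q ^ (Suc r - k)) = (\<Sum>k<r. q * q ^ (r - k)) + q"
    by (simp add: Suc_diff_le)
  also have "\<dots> = q * (\<Sum>k<r. q ^ (r - k)) + q" by (simp add: sum_distrib_left)
  also have "\<dots> = q * ((1 - q ^ Suc r) / (1 - q))"
    unfolding Suc using assms by (simp add: field_simps)
  finally show ?case .
qed


theorem mainTheorem2:
  fixes P :: "nat pmf" and p q \<mu> :: real and r :: nat
  assumes "pmf P 0 = 0"
    and "summable (\<lambda>k. real k * pmf P k)"
    and "\<mu> = (\<Sum>k. real k * pmf P k)"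
    and "0 < p" "p < 1" "0 < q" "q < 1"
  shows "(\<mu> * p < 1 \<longrightarrow> expected_cluster_size P p q r =
            ennreal (1 / (1 - \<mu> * p) * (1 + q * ((1 - q ^ r) / (1 - q)) * (1 - p))))
       \<and> (\<mu> * p > 1 \<longrightarrow> expected_cluster_size P p q r = \<infinity>)"
proof -
  have pq: "0 \<le> p" "p \<le> 1" "0 \<le> q" "q \<le> 1" using assms by auto
  define f where "f z = ennreal (q ^ (r - fst z) * hr P p (snd z))" for z :: "nat \<times> nat list"
  have AE1: "AE \<omega> in gw_perc P p q. cluster_size \<omega> (Z r)
      = (\<integral>\<^sup>+z. indicator {\<omega>. cond r (fst z) (snd z) \<omega>} \<omega> \<partial>count_space (Param r))"
    using AE_tree[OF assms(1) pq, of r]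
  proof eventually_elim
    case (elim \<omega>)
    have "cluster_size \<omega> (Z r) = (\<integral>\<^sup>+y. indicator (cluster \<omega> (Z r)) y \<partial>count_space UNIV)"
      unfolding cluster_size_def by simp
    also have "\<dots> = (\<integral>\<^sup>+z. indicator (cluster \<omega> (Z r)) ((\<lambda>(k,w). w @ Z k) z) \<partial>count_space (Param r))"
      by (rule nn_integral_bij_count_space[OF bij_Param, symmetric])
    also have "\<dots> = (\<integral>\<^sup>+z. indicator {\<omega>. cond r (fst z) (snd z) \<omega>} \<omega> \<partial>count_space (Param r))"
    proof (intro nn_integral_cong)
      fix z assume "z \<in> space (count_space (Param r))"
      then have z: "z \<in> Param r" by simp
      obtain k w where kw: "z = (k,w)" by (cases z)
      show "indicator (cluster \<omega> (Z r)) ((\<lambda>(k,w). w @ Z k) z) = (indicator {\<omega>. cond r (fst z) (snd z) \<omega>} \<omega> :: ennreal)"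
        using cluster_iff[OF elim, of k w] z kw by (simp add: indicator_def)
    qed
    finally show ?case .
  qed
  have step1: "expected_cluster_size P p q r = (\<integral>\<^sup>+z. f z \<partial>count_space (Param r))"
  proof -
    have "expected_cluster_size P p q r = (\<integral>\<^sup>+\<omega>. \<integral>\<^sup>+z. indicator {\<omega>. cond r (fst z) (snd z) \<omega>} \<omega> \<partial>count_space (Param r) \<partial>gw_perc P p q)"
      unfolding expected_cluster_size_def source_def by (rule nn_integral_cong_AE[OF AE1])
    also have "\<dots> = (\<integral>\<^sup>+z. \<integral>\<^sup>+\<omega>. indicator {\<omega>. cond r (fst z) (snd z) \<omega>} \<omega> \<partial>gw_perc P p q \<partial>count_space (Param r))"
    proof (rule nn_integral_count_space_nn_integral)
      show "countable (Param r)" by (rule countableI_type)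
      fix z assume "z \<in> Param r"
      then have "{\<omega>. cond r (fst z) (snd z) \<omega>} \<in> sets (gw_perc P p q)"
        using meas_cond(1)[of "fst z" "snd z" r p q P] pq by simp
      then show "(\<lambda>\<omega>. indicator {\<omega>. cond r (fst z) (snd z) \<omega>} \<omega> :: ennreal) \<in> borel_measurable (gw_perc P p q)"
        by (rule borel_measurable_indicator)
    qed
    also have "\<dots> = (\<integral>\<^sup>+z. f z \<partial>count_space (Param r))"
    proof (intro nn_integral_cong)
      fix z assume "z \<in> space (count_space (Param r))"
      then have z: "(fst z, snd z) \<in> Param r" by simp
      show "(\<integral>\<^sup>+\<omega>. indicator {\<omega>. cond r (fst z) (snd z) \<omega>} \<omega> \<partial>gw_perc P p q) = f z"
        using meas_cond[OF z pq] by (simp add: f_def)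
    qed
    finally show ?thesis .
  qed
  define G where "G = (\<integral>\<^sup>+w. ennreal (hr P p w) \<partial>count_space UNIV)"
  define SWv where "SWv = (\<integral>\<^sup>+w. ennreal (hr P p w) * indicator {w. w = [] \<or> last w \<noteq> 0} w \<partial>count_space UNIV)"
  have step2: "(\<integral>\<^sup>+z. f z \<partial>count_space (Param r)) = (\<Sum>k<r. ennreal (q ^ (r - k)) * SWv) + G"
  proof -
    have "(\<integral>\<^sup>+z. f z \<partial>count_space (Param r)) = (\<integral>\<^sup>+z. f z * indicator (Param r) z \<partial>count_space UNIV)"
      by (simp add: nn_integral_count_space_indicator)
    also have "\<dots> = (\<integral>\<^sup>+k. \<integral>\<^sup>+w. f (k,w) * indicator (Param r) (k,w) \<partial>count_space UNIV \<partial>count_space UNIV)"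
      by (rule nn_sigma)
    also have "\<dots> = (\<integral>\<^sup>+k. (if k < r then ennreal (q ^ (r - k)) * SWv else if k = r then G else 0) \<partial>count_space UNIV)"
    proof (intro nn_integral_cong)
      fix k :: nat
      consider "k < r" | "k = r" | "r < k" by linarith
      then show "(\<integral>\<^sup>+w. f (k,w) * indicator (Param r) (k,w) \<partial>count_space UNIV)
          = (if k < r then ennreal (q ^ (r - k)) * SWv else if k = r then G else 0)"
      proof cases
        case 1
        have "(\<integral>\<^sup>+w. f (k,w) * indicator (Param r) (k,w) \<partial>count_space UNIV)
            = (\<integral>\<^sup>+w. ennreal (q ^ (r - k)) * (ennreal (hr P p w) * indicator {w. w = [] \<or> last w \<noteq> 0} w) \<partial>count_space UNIV)"
          using 1 pq by (intro nn_integral_cong) (auto simp: f_def Param_def indicator_def ennreal_mult')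
        also have "\<dots> = ennreal (q ^ (r - k)) * SWv" by (simp add: nn_integral_cmult SWv_def)
        finally show ?thesis using 1 by simp
      next
        case 2
        have "(\<integral>\<^sup>+w. f (k,w) * indicator (Param r) (k,w) \<partial>count_space UNIV)
            = (\<integral>\<^sup>+w. ennreal (hr P p w) \<partial>count_space UNIV)"
          using 2 by (intro nn_integral_cong) (auto simp: f_def Param_def indicator_def)
        then show ?thesis using 2 by (simp add: G_def)
      next
        case 3
        then show ?thesis by (simp add: Param_def indicator_def)
      qed
    qed
    also have "\<dots> = (\<Sum>k\<in>{..r}. (if k < r then ennreal (q ^ (r - k)) * SWv else if k = r then G else 0))"
      by (rule nn_integral_count_space') auto
    also have "\<dots> = (\<Sum>k<r. ennreal (q ^ (r - k)) * SWv) + G"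
      unfolding lessThan_Suc_atMost[symmetric] sum.lessThan_Suc by simp
    finally show ?thesis .
  qed
  have mu0: "0 \<le> \<mu>" using assms(2,3) by (simp add: suminf_nonneg)
  have cval: "(\<integral>\<^sup>+i. ennreal (p * TT P i) \<partial>count_space UNIV) = ennreal (\<mu> * p)"
  proof -
    have "(\<integral>\<^sup>+i. ennreal (p * TT P i) \<partial>count_space UNIV) = (\<integral>\<^sup>+i. ennreal p * ennreal (TT P i) \<partial>count_space UNIV)"
      using pq by (intro nn_integral_cong) (simp add: ennreal_mult')
    also have "\<dots> = ennreal p * ennreal \<mu>"
      by (simp add: nn_integral_cmult mu_sum[OF assms(2)] assms(3))
    finally show ?thesis using pq mu0 by (simp add: ennreal_mult mult.commute)
  qed
  have Gval: "G = (\<Sum>m. ennreal (\<mu> * p) ^ m)"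
    unfolding G_def using G_sum[OF pq(1), of P] cval by simp
  define c' where "c' = (\<integral>\<^sup>+i. ennreal (p * TT P i) * indicator {i. i \<noteq> 0} i \<partial>count_space UNIV)"
  have csplit: "ennreal (\<mu> * p) = ennreal p + c'"
    using c_split[OF assms(1), of p] cval by (simp add: c'_def)
  have SWval: "SWv = 1 + G * c'"
    unfolding SWv_def G_def c'_def by (rule SW[OF pq(1)])
  have E: "expected_cluster_size P p q r = (\<Sum>k<r. ennreal (q ^ (r - k)) * (1 + G * c')) + G"
    using step1 step2 SWval by simp
  show ?thesis
  proof (intro conjI impI)
    assume lt: "\<mu> * p < 1"
    define g where "g = 1 / (1 - \<mu> * p)"
    have g0: "0 \<le> g" using lt by (simp add: g_def)
    have Gg: "G = ennreal g" unfolding Gval g_def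
      by (rule geo_lt) (use lt mu0 pq in auto)
    have "c' \<le> ennreal (\<mu> * p)" using csplit by simp
    then have "c' \<noteq> \<infinity>" by (auto simp: top_unique)
    then obtain t where t: "c' = ennreal t" "0 \<le> t" by (cases c') auto
    have "ennreal (\<mu> * p) = ennreal (p + t)" using csplit t pq by (simp add: ennreal_plus)
    then have tv: "t = \<mu> * p - p" using t pq mu0 by (subst (asm) ennreal_inj) auto
    have "(1::ennreal) + G * c' = ennreal (1 + g * t)"
      using Gg t g0 by (simp add: ennreal_mult ennreal_plus)
    then have "expected_cluster_size P p q r = (\<Sum>k<r. ennreal (q ^ (r - k)) * ennreal (1 + g * t)) + ennreal g"
      using E Gg by simp
    also have "\<dots> = (\<Sum>k<r. ennreal (q ^ (r - k) * (1 + g * t))) + ennreal g"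
      using pq g0 t by (intro arg_cong2[where f="(+)"] sum.cong refl) (simp add: ennreal_mult')
    also have "\<dots> = ennreal (\<Sum>k<r. q ^ (r - k) * (1 + g * t)) + ennreal g"
      using pq g0 t by (subst sum_ennreal) auto
    also have "\<dots> = ennreal ((\<Sum>k<r. q ^ (r - k) * (1 + g * t)) + g)"
      using pq g0 t by (intro ennreal_plus[symmetric] sum_nonneg) auto
    also have "(\<Sum>k<r. q ^ (r - k) * (1 + g * t)) + g = (\<Sum>k<r. q ^ (r - k)) * (1 + g * t) + g"
      by (simp add: sum_distrib_right)
    also have "\<dots> = q * ((1 - q ^ r) / (1 - q)) * (1 + g * t) + g"
      using assms by (simp add: geo_q)
    also have "\<dots> = 1 / (1 - \<mu> * p) * (1 + q * ((1 - q ^ r) / (1 - q)) * (1 - p))"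
    proof -
      have h1: "1 + g * t = g * (1 - p)" unfolding g_def tv using lt by (simp add: field_simps)
      have h2: "S * (g * (1 - p)) + g = g * (1 + S * (1 - p))" for S by (simp add: algebra_simps)
      show ?thesis unfolding h1 unfolding h2 unfolding g_def by (simp add: mult.assoc)
    qed
    finally show "expected_cluster_size P p q r =
            ennreal (1 / (1 - \<mu> * p) * (1 + q * ((1 - q ^ r) / (1 - q)) * (1 - p)))" .
  next
    assume gt: "\<mu> * p > 1"
    have "G = \<infinity>" unfolding Gval by (rule geo_ge) (use gt in auto)
    then show "expected_cluster_size P p q r = \<infinity>" using E by simp
  qed
qed

end
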